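(* Let $a,b,a',b'\in\mathbb{R}$, $n,m\in\mathbb{N}_0$, and for $\sigma>0$ let \[ f(\sigma)=\int_a^b\int_{a'}^{b'}x^ny^me^{-\sigma^2(x-y)^2}\,dy\,dx. \] Let $\Delta=\{b-b',\,b-a',\,a-b',\,a-a'\}$. Then $f$ is a linear combination (with coefficients independent of $\sigma$) of terms of the form \[ \sigma^{-2k}e^{-\sigma^2\delta^2}\qquad\text{and}\qquad\sigma^{-(2k-1)}\operatorname{Erf}(\sigma\delta),\qquad k\in\{1,2,\dots\},\ \delta\in\Delta, \] where the exponent $\nu$ of $\sigma^{-1}$ (namely $\nu=2k$ in the first case and $\nu=2k-1$ in the second) satisfies $1\le\nu\le n+m+2$. The coefficient of a term belonging to $\delta=c-c'$ with $c\in\{a,b\}$ and $c'\in\{a',b'\}$ is a homogeneous polynomial of degree $n+m+2-\nu$ in $\mathbb{Q}[c,c']$.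
   Context: $\operatorname{Erf}(\xi)=\int_0^\xi e^{-x^2}\,dx$ (the odd primitive of the Gaussian, normalized without the factor $2/\sqrt\pi$). *)

theory Defs
  imports "HOL-Analysis.Analysis"
begin

text \<open>Erf(xi) = oriented integral of exp(-x^2) from 0 to xi (no 2/sqrt pi factor).\<close>
definition Erf :: "real \<Rightarrow> real" where
  "Erf \<xi> = (LBINT x=0..\<xi>. exp (- (x\<^sup>2)))"

definition gauss_double_int :: "nat \<Rightarrow> nat \<Rightarrow> real \<Rightarrow> real \<Rightarrow> real \<Rightarrow> real \<Rightarrow> real \<Rightarrow> real" where
  "gauss_double_int n m a b a' b' \<sigma> =
     (LBINT x=a..b. (LBINT y=a'..b'. x ^ n * y ^ m * exp (- (\<sigma>\<^sup>2 * (x - y)\<^sup>2))))"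

end

theory Submission imports Defs begin

lemma Erf_deriv: "(Erf has_real_derivative exp (- (t\<^sup>2))) (at t)"
proof -
  define e where "e = \<bar>t\<bar> + 1"
  have c: "continuous_on {-e..e} (\<lambda>x::real. exp (- (x\<^sup>2)))"
    by (intro continuous_intros)
  have "((\<lambda>u. LBINT y=(ereal 0)..u. exp (- (y\<^sup>2))) has_vector_derivative exp (- (t\<^sup>2))) (at t within {-e..e})"
    by (rule interval_integral_FTC2[OF _ _ c]) (auto simp: e_def)
  then have "((\<lambda>u. LBINT y=0..u. exp (- (y\<^sup>2))) has_vector_derivative exp (- (t\<^sup>2))) (at t within {-e..e})"
    by (simp add: zero_ereal_def)
  then have "((\<lambda>u. LBINT y=0..u. exp (- (y\<^sup>2))) has_vector_derivative exp (- (t\<^sup>2))) (at t within {-e<..<e})"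
    by (rule has_vector_derivative_within_subset) auto
  then have "((\<lambda>u. LBINT y=0..u. exp (- (y\<^sup>2))) has_vector_derivative exp (- (t\<^sup>2))) (at t)"
    by (subst (asm) has_vector_derivative_within_open) (auto simp: e_def)
  then show ?thesis
    by (simp add: has_real_derivative_iff_has_vector_derivative Erf_def[abs_def])
qed

lemma Erf_chain [derivative_intros]:
  "(f has_real_derivative f') (at x within s) \<Longrightarrow>
   ((\<lambda>x. Erf (f x)) has_real_derivative exp (- ((f x)\<^sup>2)) * f') (at x within s)"
  using DERIV_chain2[OF Erf_deriv] by blast

lemma Erf_0 [simp]: "Erf 0 = 0" by (simp add: Erf_def zero_ereal_def)

lemma isCont_Erf: "isCont Erf t" using Erf_deriv DERIV_isCont by blast

lemma continuous_on_Erf [continuous_intros]: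
  "continuous_on s f \<Longrightarrow> continuous_on s (\<lambda>x. Erf (f x))"
  by (rule continuous_on_compose2[of UNIV Erf]) (auto intro: continuous_at_imp_continuous_on isCont_Erf)

lemma Erf_odd: "Erf (- t) = - Erf t"
proof -
  have "\<forall>t. ((\<lambda>t. Erf (- t) + Erf t) has_real_derivative 0) (at t)"
  proof
    fix t :: real
    show "((\<lambda>t. Erf (- t) + Erf t) has_real_derivative 0) (at t)"
      by (rule derivative_eq_intros Erf_deriv refl | simp)+
  qed
  then have "Erf (- t) + Erf t = Erf (- 0) + Erf 0"
    by (rule DERIV_isconst_all)
  then show ?thesis by simp
qed


definition term_fn :: "nat \<Rightarrow> nat \<Rightarrow> nat \<Rightarrow> real \<Rightarrow> real \<Rightarrow> real \<Rightarrow> real" where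
  "term_fn i j \<nu> \<sigma> x y = x ^ i * y ^ j *
     (if even \<nu> then (1 / \<sigma> ^ \<nu>) * exp (- (\<sigma>\<^sup>2 * (x - y)\<^sup>2))
      else (1 / \<sigma> ^ \<nu>) * Erf (\<sigma> * (x - y)))"

lemma aux_even:
  fixes \<sigma> E x y :: real
  assumes "\<sigma> > 0"
  shows "x ^ i * (of_nat j * y ^ (j - 1)) * ((1 / \<sigma> ^ (k+2)) * E)
      + x ^ i * y ^ j * ((1 / \<sigma> ^ (k+2)) * (E * (2 * \<sigma>\<^sup>2 * (x - y))))
   = of_nat j * (x ^ i * y ^ (j - 1) * ((1 / \<sigma> ^ (k+2)) * E))
     + 2 * (x ^ (i+1) * y ^ j * ((1 / \<sigma> ^ k) * E) - x ^ i * y ^ (j+1) * ((1 / \<sigma> ^ k) * E))"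
  using assms by (simp add: field_simps power2_eq_square)

lemma dE: "((\<lambda>y. exp (- (\<sigma>\<^sup>2 * (x - y)\<^sup>2))) has_real_derivative
   exp (- (\<sigma>\<^sup>2 * (x - y)\<^sup>2)) * (2 * \<sigma>\<^sup>2 * (x - y))) (at y)"
  apply (rule derivative_eq_intros refl)+
  apply (simp only: mult_cancel_left)
  apply (simp add: algebra_simps)
  done

lemma dErf: "((\<lambda>y. Erf (\<sigma> * (x - y))) has_real_derivative
   - (exp (- (\<sigma>\<^sup>2 * (x - y)\<^sup>2)) * \<sigma>)) (at y)"
  apply (rule derivative_eq_intros refl)+
  apply (simp add: power_mult_distrib)
  done

lemma term_dy_even:
  assumes "\<sigma> > 0" "even k"
  shows "((\<lambda>y. term_fn i j (k+2) \<sigma> x y) has_real_derivative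
     (of_nat j * term_fn i (j-1) (k+2) \<sigma> x y + 2 * (term_fn (i+1) j k \<sigma> x y - term_fn i (j+1) k \<sigma> x y))) (at y)"
proof -
  define E where "E = (\<lambda>y. exp (- (\<sigma>\<^sup>2 * (x - y)\<^sup>2)))"
  have d: "(E has_real_derivative E y * (2 * \<sigma>\<^sup>2 * (x - y))) (at y)" for y
    unfolding E_def by (rule dE)
  have "((\<lambda>y. x ^ i * y ^ j * ((1 / \<sigma> ^ (k+2)) * E y)) has_real_derivative
     (x ^ i * (of_nat j * y ^ (j - 1)) * ((1 / \<sigma> ^ (k+2)) * E y)
      + x ^ i * y ^ j * ((1 / \<sigma> ^ (k+2)) * (E y * (2 * \<sigma>\<^sup>2 * (x - y)))))) (at y)"
    by (rule derivative_eq_intros refl d | simp)+ (simp add: algebra_simps)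
  moreover have "(\<lambda>y. term_fn i j (k+2) \<sigma> x y) = (\<lambda>y. x ^ i * y ^ j * ((1 / \<sigma> ^ (k+2)) * E y))"
    using assms by (simp add: term_fn_def E_def)
  moreover have "x ^ i * (of_nat j * y ^ (j - 1)) * ((1 / \<sigma> ^ (k+2)) * E y)
      + x ^ i * y ^ j * ((1 / \<sigma> ^ (k+2)) * (E y * (2 * \<sigma>\<^sup>2 * (x - y))))
     = of_nat j * term_fn i (j-1) (k+2) \<sigma> x y + 2 * (term_fn (i+1) j k \<sigma> x y - term_fn i (j+1) k \<sigma> x y)"
    unfolding aux_even[OF assms(1)] using assms by (simp add: term_fn_def E_def)
  ultimately show ?thesis by simp
qed

lemma term_fn_even: "even \<nu> \<Longrightarrow> term_fn i j \<nu> \<sigma> x y = x ^ i * y ^ j * ((1 / \<sigma> ^ \<nu>) * exp (- (\<sigma>\<^sup>2 * (x - y)\<^sup>2)))"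
  by (simp add: term_fn_def)

lemma term_fn_odd: "odd \<nu> \<Longrightarrow> term_fn i j \<nu> \<sigma> x y = x ^ i * y ^ j * ((1 / \<sigma> ^ \<nu>) * Erf (\<sigma> * (x - y)))"
  by (simp add: term_fn_def)

lemma aux_odd:
  fixes \<sigma> E R x y :: real
  assumes "\<sigma> > 0"
  shows "x ^ i * (of_nat j * y ^ (j - 1)) * ((1 / \<sigma> ^ (k+1)) * R)
      + x ^ i * y ^ j * ((1 / \<sigma> ^ (k+1)) * (- (E * \<sigma>)))
     = of_nat j * (x ^ i * y ^ (j - 1) * ((1 / \<sigma> ^ (k+1)) * R)) - x ^ i * y ^ j * ((1 / \<sigma> ^ k) * E)"
  using assms by (simp add: field_simps)

lemma odd_succ: "even k \<Longrightarrow> odd (k + 1::nat)" by simp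

lemma term_dy_odd:
  assumes "\<sigma> > 0" "even k"
  shows "((\<lambda>y. term_fn i j (k+1) \<sigma> x y) has_real_derivative
     (of_nat j * term_fn i (j-1) (k+1) \<sigma> x y - term_fn i j k \<sigma> x y)) (at y)"
proof -
  define E where "E = exp (- (\<sigma>\<^sup>2 * (x - y)\<^sup>2))"
  have d: "((\<lambda>y. Erf (\<sigma> * (x - y))) has_real_derivative - (E * \<sigma>)) (at y)"
    unfolding E_def by (rule dErf)
  have "((\<lambda>y. x ^ i * y ^ j * ((1 / \<sigma> ^ (k+1)) * Erf (\<sigma> * (x - y)))) has_real_derivative
     (x ^ i * (of_nat j * y ^ (j - 1)) * ((1 / \<sigma> ^ (k+1)) * Erf (\<sigma> * (x - y)))
      + x ^ i * y ^ j * ((1 / \<sigma> ^ (k+1)) * (- (E * \<sigma>))))) (at y)"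
    by (rule d derivative_eq_intros refl | simp)+
  moreover have "(\<lambda>y. term_fn i j (k+1) \<sigma> x y) = (\<lambda>y. x ^ i * y ^ j * ((1 / \<sigma> ^ (k+1)) * Erf (\<sigma> * (x - y))))"
    using assms by (simp add: term_fn_def)
  moreover have "x ^ i * (of_nat j * y ^ (j - 1)) * ((1 / \<sigma> ^ (k+1)) * Erf (\<sigma> * (x - y)))
      + x ^ i * y ^ j * ((1 / \<sigma> ^ (k+1)) * (- (E * \<sigma>)))
     = of_nat j * term_fn i (j-1) (k+1) \<sigma> x y - term_fn i j k \<sigma> x y"
    using assms unfolding term_fn_even[OF assms(2)] term_fn_odd[OF odd_succ[OF assms(2)]] E_def[symmetric]
    using assms by (intro aux_odd) auto
  ultimately show ?thesis by simp
qed

inductive fm :: "nat \<Rightarrow> nat \<Rightarrow> (real \<Rightarrow> real \<Rightarrow> real \<Rightarrow> real) \<Rightarrow> bool" for w where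
  fm_zero: "fm w D (\<lambda>\<sigma> x y. 0)"
| fm_term: "w \<le> \<nu> \<Longrightarrow> i + j + \<nu> = D \<Longrightarrow> fm w D (\<lambda>\<sigma> x y. of_rat r * term_fn i j \<nu> \<sigma> x y)"
| fm_add: "fm w D F \<Longrightarrow> fm w D G \<Longrightarrow> fm w D (\<lambda>\<sigma> x y. F \<sigma> x y + G \<sigma> x y)"

lemma fm_term1: "w \<le> \<nu> \<Longrightarrow> i + j + \<nu> = D \<Longrightarrow> fm w D (term_fn i j \<nu>)"
  using fm_term[of w \<nu> i j D 1] by simp

lemma fm_scale: "fm w D F \<Longrightarrow> fm w D (\<lambda>\<sigma> x y. of_rat c * F \<sigma> x y)"
proof (induction rule: fm.induct)
  case (fm_zero D) then show ?case using fm.fm_zero by simp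
next
  case (fm_term \<nu> i j D r)
  then show ?case using fm.fm_term[of w \<nu> i j D "c * r"] by (simp add: of_rat_mult mult.assoc)
next
  case (fm_add D F G)
  then show ?case using fm.fm_add[OF fm_add.IH] by (simp add: distrib_left)
qed

lemma fm_mono: "fm w D F \<Longrightarrow> w' \<le> w \<Longrightarrow> fm w' D F"
  by (induction rule: fm.induct) (auto intro: fm.intros)

lemma fm_diff: "fm w D F \<Longrightarrow> fm w D G \<Longrightarrow> fm w D (\<lambda>\<sigma> x y. F \<sigma> x y - G \<sigma> x y)"
  using fm_add[OF _ fm_scale[of w D G "-1"], of F] by simp

definition yprim :: "(real \<Rightarrow> real \<Rightarrow> real \<Rightarrow> real) \<Rightarrow> (real \<Rightarrow> real \<Rightarrow> real \<Rightarrow> real) \<Rightarrow> bool" where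
  "yprim F G \<longleftrightarrow> (\<forall>\<sigma>>0. \<forall>x y. ((\<lambda>y. G \<sigma> x y) has_real_derivative F \<sigma> x y) (at y))"

lemma yprimI: "(\<And>\<sigma> x y. \<sigma> > 0 \<Longrightarrow> ((\<lambda>y. G \<sigma> x y) has_real_derivative F \<sigma> x y) (at y)) \<Longrightarrow> yprim F G"
  unfolding yprim_def by blast

lemma yprimD: "yprim F G \<Longrightarrow> \<sigma> > 0 \<Longrightarrow> ((\<lambda>y. G \<sigma> x y) has_real_derivative F \<sigma> x y) (at y)"
  unfolding yprim_def by blast

lemma even_prim:
  "\<forall>i k. \<exists>G. fm 1 (i + j + 2*k + 1) G \<and> yprim (term_fn i j (2*k)) G"
proof (induction j rule: less_induct)
  case (less j)
  show ?case
  proof (intro allI)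
    fix i k
    show "\<exists>G. fm 1 (i + j + 2*k + 1) G \<and> yprim (term_fn i j (2*k)) G"
    proof (cases j)
      case 0
      let ?G = "\<lambda>\<sigma> x y. of_rat (-1) * term_fn i 0 (2*k+1) \<sigma> x y"
      have "fm 1 (i + j + 2*k + 1) ?G" using 0 by (intro fm_term) auto
      moreover have "yprim (term_fn i j (2*k)) ?G"
      proof (rule yprimI)
        fix \<sigma> x y :: real assume "\<sigma> > 0"
        from term_dy_odd[OF this, of "2*k" i 0 x y]
        show "((\<lambda>y. ?G \<sigma> x y) has_real_derivative term_fn i j (2*k) \<sigma> x y) (at y)"
          using 0 by (auto intro!: derivative_eq_intros)
      qed
      ultimately show ?thesis by blast
    next
      case (Suc j')
      have IH1: "\<forall>i k. \<exists>G. fm 1 (i + j' + 2*k + 1) G \<and> yprim (term_fn i j' (2*k)) G"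
        using less Suc by simp
      then obtain G1 where G1: "fm 1 (i + 1 + j' + 2*k + 1) G1" "yprim (term_fn (i+1) j' (2*k)) G1"
        by (metis add.assoc add.commute)
      show ?thesis
      proof (cases j')
        case 0
        let ?G = "\<lambda>\<sigma> x y. G1 \<sigma> x y - of_rat (1/2) * term_fn i j' (2*k+2) \<sigma> x y"
        have "fm 1 (i + j + 2*k + 1) ?G"
          using G1(1) Suc 0 by (intro fm_diff fm_term) (auto simp: algebra_simps)
        moreover have "yprim (term_fn i j (2*k)) ?G"
        proof (rule yprimI)
          fix \<sigma> x y :: real assume s: "\<sigma> > 0"
          have "((\<lambda>y. ?G \<sigma> x y) has_real_derivative
             term_fn (i+1) j' (2*k) \<sigma> x y - of_rat (1/2) * (of_nat j' * term_fn i (j'-1) (2*k+2) \<sigma> x y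
               + 2 * (term_fn (i+1) j' (2*k) \<sigma> x y - term_fn i (j'+1) (2*k) \<sigma> x y))) (at y)"
            using yprimD[OF G1(2) s] term_dy_even[OF s, of "2*k" i j' x y]
            by (auto intro!: derivative_eq_intros simp: add.assoc)
          then show "((\<lambda>y. ?G \<sigma> x y) has_real_derivative term_fn i j (2*k) \<sigma> x y) (at y)"
            using Suc 0 by (simp add: of_rat_divide algebra_simps)
        qed
        ultimately show ?thesis by blast
      next
        case (Suc j'')
        have IH2: "\<forall>i k. \<exists>G. fm 1 (i + j'' + 2*k + 1) G \<and> yprim (term_fn i j'' (2*k)) G"
          using less \<open>j = Suc j'\<close> Suc by simp
        then obtain G2 where
          G2: "fm 1 (i + j'' + 2*(k+1) + 1) G2" "yprim (term_fn i j'' (2*(k+1))) G2"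
          by blast
        let ?G = "\<lambda>\<sigma> x y. (G1 \<sigma> x y + of_rat (of_nat j' / 2) * G2 \<sigma> x y)
                 - of_rat (1/2) * term_fn i j' (2*k+2) \<sigma> x y"
        have "fm 1 (i + j + 2*k + 1) ?G"
          using G1(1) G2(1) \<open>j = Suc j'\<close> Suc
          by (intro fm_diff fm_term fm_add fm_scale) (auto simp: algebra_simps)
        moreover have "yprim (term_fn i j (2*k)) ?G"
        proof (rule yprimI)
          fix \<sigma> x y :: real assume s: "\<sigma> > 0"
          have "((\<lambda>y. ?G \<sigma> x y) has_real_derivative
             (term_fn (i+1) j' (2*k) \<sigma> x y + of_rat (of_nat j' / 2) * term_fn i j'' (2*(k+1)) \<sigma> x y)
              - of_rat (1/2) * (of_nat j' * term_fn i (j'-1) (2*k+2) \<sigma> x y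
               + 2 * (term_fn (i+1) j' (2*k) \<sigma> x y - term_fn i (j'+1) (2*k) \<sigma> x y))) (at y)"
            using yprimD[OF G1(2) s] yprimD[OF G2(2) s] term_dy_even[OF s, of "2*k" i j' x y]
            by (auto intro!: derivative_eq_intros simp: add.assoc)
          then show "((\<lambda>y. ?G \<sigma> x y) has_real_derivative term_fn i j (2*k) \<sigma> x y) (at y)"
            using \<open>j = Suc j'\<close> Suc by (simp add: of_rat_divide of_rat_add field_simps)
        qed
        ultimately show ?thesis by blast
      qed
    qed
  qed
qed


lemma term_prim: "\<exists>G. fm 1 (i + j + \<nu> + 1) G \<and> yprim (term_fn i j \<nu>) G"
proof (cases "even \<nu>")
  case True
  then obtain k where k: "\<nu> = 2*k" by blast
  then show ?thesis using even_prim[of j] by auto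
next
  case False
  then obtain k where k: "\<nu> = 2*k+1" using oddE by blast
  obtain G3 where G3: "fm 1 (i + (j+1) + 2*k + 1) G3" "yprim (term_fn i (j+1) (2*k)) G3"
    using even_prim[of "j+1"] by blast
  let ?G = "\<lambda>\<sigma> x y. of_rat (1 / of_nat (j+1)) * (term_fn i (j+1) (2*k+1) \<sigma> x y + G3 \<sigma> x y)"
  have "fm 1 (i + j + \<nu> + 1) ?G"
    using G3(1) k by (intro fm_scale fm_add fm_term1) auto
  moreover have "yprim (term_fn i j \<nu>) ?G"
  proof (rule yprimI)
    fix \<sigma> x y :: real assume s: "\<sigma> > 0"
    have "((\<lambda>y. ?G \<sigma> x y) has_real_derivative of_rat (1 / of_nat (j+1)) *
       ((of_nat (j+1) * term_fn i j (2*k+1) \<sigma> x y - term_fn i (j+1) (2*k) \<sigma> x y) + term_fn i (j+1) (2*k) \<sigma> x y)) (at y)"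
      using yprimD[OF G3(2) s] term_dy_odd[OF s, of "2*k" i "j+1" x y]
      by (auto intro!: derivative_eq_intros)
    then show "((\<lambda>y. ?G \<sigma> x y) has_real_derivative term_fn i j \<nu> \<sigma> x y) (at y)"
      by (rule DERIV_cong) (use k in \<open>simp add: of_rat_divide of_rat_add\<close>)
  qed
  ultimately show ?thesis by blast
qed

lemma fm_prim: "fm w D F \<Longrightarrow> w = 0 \<Longrightarrow> \<exists>G. fm 1 (D+1) G \<and> yprim F G"
proof (induction rule: fm.induct)
  case (fm_zero D)
  have "fm 1 (D+1) (\<lambda>\<sigma> x y. 0)" by (rule fm.fm_zero)
  moreover have "yprim (\<lambda>\<sigma> x y. 0) (\<lambda>\<sigma> x y. 0)" by (rule yprimI) simp
  ultimately show ?case by blast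
next
  case (fm_term \<nu> i j D r)
  obtain G where G: "fm 1 (i + j + \<nu> + 1) G" "yprim (term_fn i j \<nu>) G" using term_prim by blast
  have "fm 1 (D+1) (\<lambda>\<sigma> x y. of_rat r * G \<sigma> x y)" using G(1) fm_term by (intro fm_scale) simp
  moreover have "yprim (\<lambda>\<sigma> x y. of_rat r * term_fn i j \<nu> \<sigma> x y) (\<lambda>\<sigma> x y. of_rat r * G \<sigma> x y)"
    by (rule yprimI) (auto intro!: derivative_eq_intros yprimD[OF G(2)])
  ultimately show ?case by blast
next
  case (fm_add D F G)
  then obtain F1 G1 where "fm 1 (D+1) F1" "yprim F F1" "fm 1 (D+1) G1" "yprim G G1" by blast
  then show ?case
    by (intro exI[of _ "\<lambda>\<sigma> x y. F1 \<sigma> x y + G1 \<sigma> x y"])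
       (auto intro!: fm.fm_add yprimI derivative_eq_intros dest: yprimD)
qed

lemma term_fn_swap: "term_fn i j \<nu> \<sigma> y x = of_rat (if even \<nu> then 1 else -1) * term_fn j i \<nu> \<sigma> x y"
proof -
  have "(y - x)\<^sup>2 = (x - y)\<^sup>2" by (simp add: power2_commute)
  moreover have "Erf (\<sigma> * (y - x)) = - Erf (\<sigma> * (x - y))"
    using Erf_odd[of "\<sigma> * (x - y)"] by (simp add: algebra_simps)
  ultimately show ?thesis by (simp add: term_fn_def)
qed

lemma fm_swap: "fm w D F \<Longrightarrow> fm w D (\<lambda>\<sigma> x y. F \<sigma> y x)"
proof (induction rule: fm.induct)
  case (fm_zero D) then show ?case by (rule fm.fm_zero)
next
  case (fm_term \<nu> i j D r)
  have "fm w D (\<lambda>\<sigma> x y. of_rat (r * (if even \<nu> then 1 else -1)) * term_fn j i \<nu> \<sigma> x y)"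
    using fm_term by (intro fm.fm_term) auto
  moreover have "(\<lambda>\<sigma> x y. of_rat r * term_fn i j \<nu> \<sigma> y x) =
     (\<lambda>\<sigma> x y. of_rat (r * (if even \<nu> then 1 else -1)) * term_fn j i \<nu> \<sigma> x y)"
    by (rule ext)+ (subst term_fn_swap, simp only: of_rat_mult mult.assoc)
  ultimately show ?case by simp
next
  case (fm_add D F G) then show ?case using fm.fm_add[OF fm_add.IH] by simp
qed

lemma fm_xprim: "fm 0 D F \<Longrightarrow> \<exists>G. fm 1 (D+1) G \<and>
   (\<forall>\<sigma>>0. \<forall>x y. ((\<lambda>x. G \<sigma> x y) has_real_derivative F \<sigma> x y) (at x))"
proof -
  assume "fm 0 D F"
  then have "fm 0 D (\<lambda>\<sigma> x y. F \<sigma> y x)" by (rule fm_swap)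
  then obtain G where G: "fm 1 (D+1) G" "yprim (\<lambda>\<sigma> x y. F \<sigma> y x) G" using fm_prim by blast
  have "fm 1 (D+1) (\<lambda>\<sigma> x y. G \<sigma> y x)" using G(1) by (rule fm_swap)
  moreover have "\<forall>\<sigma>>0. \<forall>x y. ((\<lambda>x. G \<sigma> y x) has_real_derivative F \<sigma> x y) (at x)"
    using yprimD[OF G(2)] by blast
  ultimately show ?thesis by blast
qed

lemma fm_cont: "fm w D F \<Longrightarrow> \<sigma> > 0 \<Longrightarrow> continuous_on S (\<lambda>x. F \<sigma> x y)"
proof (induction rule: fm.induct)
  case (fm_zero D) then show ?case by simp
next
  case (fm_term \<nu> i j D r)
  show ?case
  proof (cases "even \<nu>")
    case True
    show ?thesis unfolding term_fn_even[OF True] by (intro continuous_intros)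
  next
    case False
    show ?thesis unfolding term_fn_odd[OF False] by (intro continuous_intros)
  qed
next
  case (fm_add D F G) then show ?case by (intro continuous_intros) auto
qed

definition gfun :: "nat \<Rightarrow> real \<Rightarrow> real \<Rightarrow> real \<Rightarrow> real" where
  "gfun \<nu> \<sigma> x y = (if even \<nu> then (1 / \<sigma> ^ \<nu>) * exp (- (\<sigma>\<^sup>2 * (x - y)\<^sup>2))
              else (1 / \<sigma> ^ \<nu>) * Erf (\<sigma> * (x - y)))"

lemma fm_explicit: "fm w D F \<Longrightarrow> w = 1 \<Longrightarrow> \<exists>q. \<forall>\<sigma> x y. F \<sigma> x y =
  (\<Sum>\<nu>\<in>{1..D}. (\<Sum>l\<in>{0..D-\<nu>}. of_rat (q \<nu> l) * x ^ l * y ^ (D-\<nu>-l)) * gfun \<nu> \<sigma> x y)"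
proof (induction rule: fm.induct)
  case (fm_zero D) then show ?case by (intro exI[of _ "\<lambda>_ _. 0"]) simp
next
  case (fm_term \<nu> i j D r)
  let ?q = "\<lambda>\<nu>' l. if \<nu>' = \<nu> \<and> l = i then r else 0"
  show ?case
  proof (intro exI[of _ ?q] allI)
    fix \<sigma> x y :: real
    have inner: "(\<Sum>l\<in>{0..D-\<nu>'}. of_rat (?q \<nu>' l) * x ^ l * y ^ (D-\<nu>'-l)) =
        (if \<nu>' = \<nu> then of_rat r * x ^ i * y ^ j else 0)" for \<nu>'
    proof (cases "\<nu>' = \<nu>")
      case True
      have "(\<Sum>l\<in>{0..D-\<nu>'}. of_rat (?q \<nu>' l) * x ^ l * y ^ (D-\<nu>'-l)) =
            (\<Sum>l\<in>{0..D-\<nu>}. if l = i then of_rat r * x ^ l * y ^ (D-\<nu>-l) else 0)"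
        using True by (intro sum.cong) auto
      also have "\<dots> = of_rat r * x ^ i * y ^ j" using fm_term by (subst sum.delta) auto
      finally show ?thesis using True by simp
    qed simp
    have "(\<Sum>\<nu>'\<in>{1..D}. (\<Sum>l\<in>{0..D-\<nu>'}. of_rat (?q \<nu>' l) * x ^ l * y ^ (D-\<nu>'-l)) * gfun \<nu>' \<sigma> x y)
        = (\<Sum>\<nu>'\<in>{1..D}. if \<nu>' = \<nu> then of_rat r * x ^ i * y ^ j * gfun \<nu>' \<sigma> x y else 0)"
    proof (intro sum.cong refl)
      fix \<nu>' assume "\<nu>' \<in> {1..D}"
      show "(\<Sum>l\<in>{0..D-\<nu>'}. of_rat (?q \<nu>' l) * x ^ l * y ^ (D-\<nu>'-l)) * gfun \<nu>' \<sigma> x y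
          = (if \<nu>' = \<nu> then of_rat r * x ^ i * y ^ j * gfun \<nu>' \<sigma> x y else 0)"
        unfolding inner by simp
    qed
    also have "\<dots> = of_rat r * x ^ i * y ^ j * gfun \<nu> \<sigma> x y" using fm_term by (subst sum.delta) auto
    finally show "of_rat r * term_fn i j \<nu> \<sigma> x y =
      (\<Sum>\<nu>'\<in>{1..D}. (\<Sum>l\<in>{0..D-\<nu>'}. of_rat (?q \<nu>' l) * x ^ l * y ^ (D-\<nu>'-l)) * gfun \<nu>' \<sigma> x y)"
      by (simp add: term_fn_def gfun_def mult.assoc)
  qed
next
  case (fm_add D F G)
  then obtain q1 q2 where q1: "\<forall>\<sigma> x y. F \<sigma> x y =
  (\<Sum>\<nu>\<in>{1..D}. (\<Sum>l\<in>{0..D-\<nu>}. of_rat (q1 \<nu> l) * x ^ l * y ^ (D-\<nu>-l)) * gfun \<nu> \<sigma> x y)"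
    and q2: "\<forall>\<sigma> x y. G \<sigma> x y =
  (\<Sum>\<nu>\<in>{1..D}. (\<Sum>l\<in>{0..D-\<nu>}. of_rat (q2 \<nu> l) * x ^ l * y ^ (D-\<nu>-l)) * gfun \<nu> \<sigma> x y)"
    by blast
  show ?case
  proof (intro exI[of _ "\<lambda>\<nu> l. q1 \<nu> l + q2 \<nu> l"] allI)
    fix \<sigma> x y :: real
    have e: "(\<Sum>l\<in>{0..D-\<nu>}. of_rat (q1 \<nu> l + q2 \<nu> l) * x ^ l * y ^ (D-\<nu>-l)) =
      (\<Sum>l\<in>{0..D-\<nu>}. of_rat (q1 \<nu> l) * x ^ l * y ^ (D-\<nu>-l)) +
      (\<Sum>l\<in>{0..D-\<nu>}. of_rat (q2 \<nu> l) * x ^ l * y ^ (D-\<nu>-l))" for \<nu>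
      unfolding sum.distrib[symmetric] by (intro sum.cong refl) (simp only: of_rat_add distrib_right)
    show "F \<sigma> x y + G \<sigma> x y =
      (\<Sum>\<nu>\<in>{1..D}. (\<Sum>l\<in>{0..D-\<nu>}. of_rat (q1 \<nu> l + q2 \<nu> l) * x ^ l * y ^ (D-\<nu>-l)) * gfun \<nu> \<sigma> x y)"
      unfolding q1[rule_format] q2[rule_format] sum.distrib[symmetric] e
      by (intro sum.cong refl) (simp only: distrib_right sum.distrib)
  qed
qed


lemma main_K: "\<exists>K. fm 1 (n+m+2) K \<and> (\<forall>\<sigma>>0. \<forall>a b a' b'.
   gauss_double_int n m a b a' b' \<sigma> = K \<sigma> b b' - K \<sigma> b a' - K \<sigma> a b' + K \<sigma> a a')"
proof -
  have "fm 0 (n+m) (term_fn n m 0)" by (rule fm_term1) auto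
  then obtain H where H: "fm 1 (n+m+1) H" "yprim (term_fn n m 0) H" using fm_prim by blast
  have "fm 0 (n+m+1) H" using H(1) by (rule fm_mono) simp
  then obtain K where K: "fm 1 (n+m+1+1) K"
    "\<forall>\<sigma>>0. \<forall>x y. ((\<lambda>x. K \<sigma> x y) has_real_derivative H \<sigma> x y) (at x)"
    using fm_xprim by blast
  have "\<forall>\<sigma>>0. \<forall>a b a' b'.
   gauss_double_int n m a b a' b' \<sigma> = K \<sigma> b b' - K \<sigma> b a' - K \<sigma> a b' + K \<sigma> a a'"
  proof (intro allI impI)
    fix \<sigma> a b a' b' :: real
    assume s: "\<sigma> > 0"
    have inner: "(LBINT y=a'..b'. x ^ n * y ^ m * exp (- (\<sigma>\<^sup>2 * (x - y)\<^sup>2))) = H \<sigma> x b' - H \<sigma> x a'" for x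
    proof (rule interval_integral_FTC_finite)
      show "continuous_on {min a' b'..max a' b'} (\<lambda>y. x ^ n * y ^ m * exp (- (\<sigma>\<^sup>2 * (x - y)\<^sup>2)))"
        by (intro continuous_intros)
      fix y
      have "((\<lambda>y. H \<sigma> x y) has_real_derivative term_fn n m 0 \<sigma> x y) (at y)"
        using yprimD[OF H(2) s] .
      then have "((\<lambda>y. H \<sigma> x y) has_real_derivative x ^ n * y ^ m * exp (- (\<sigma>\<^sup>2 * (x - y)\<^sup>2))) (at y)"
        by (simp add: term_fn_def)
      then show "((\<lambda>y. H \<sigma> x y) has_vector_derivative x ^ n * y ^ m * exp (- (\<sigma>\<^sup>2 * (x - y)\<^sup>2)))
          (at y within {min a' b'..max a' b'})"
        by (simp add: has_real_derivative_iff_has_vector_derivative has_vector_derivative_at_within)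
    qed
    have "gauss_double_int n m a b a' b' \<sigma> = (LBINT x=a..b. H \<sigma> x b' - H \<sigma> x a')"
      unfolding gauss_double_int_def inner ..
    also have "\<dots> = (K \<sigma> b b' - K \<sigma> b a') - (K \<sigma> a b' - K \<sigma> a a')"
    proof (rule interval_integral_FTC_finite)
      show "continuous_on {min a b..max a b} (\<lambda>x. H \<sigma> x b' - H \<sigma> x a')"
        using fm_cont[OF H(1) s] by (intro continuous_intros)
      fix x
      have "((\<lambda>x. K \<sigma> x b' - K \<sigma> x a') has_real_derivative H \<sigma> x b' - H \<sigma> x a') (at x)"
        using K(2) s by (intro DERIV_diff) auto
      then show "((\<lambda>x. K \<sigma> x b' - K \<sigma> x a') has_vector_derivative H \<sigma> x b' - H \<sigma> x a')
          (at x within {min a b..max a b})"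
        by (simp add: has_real_derivative_iff_has_vector_derivative has_vector_derivative_at_within)
    qed
    finally show "gauss_double_int n m a b a' b' \<sigma> = K \<sigma> b b' - K \<sigma> b a' - K \<sigma> a b' + K \<sigma> a a'"
      by simp
  qed
  moreover have "fm 1 (n+m+2) K" using K(1) by (simp add: add.assoc)
  ultimately show ?thesis by blast
qed

lemma per_term:
  "(let c = (if i then b else a); c' = (if j then b' else a'); \<delta> = c - c' in
      (\<Sum>l\<in>L. of_rat ((if i = j then 1 else -1) * q l) * c ^ l * c' ^ (f l))
      * (if even \<nu> then (1 / \<sigma> ^ \<nu>) * exp (- (\<sigma>\<^sup>2 * \<delta>\<^sup>2)) else (1 / \<sigma> ^ \<nu>) * Erf (\<sigma> * \<delta>)))
   = (if i = j then 1 else -1) * ((\<Sum>l\<in>L. of_rat (q l) * (if i then b else a) ^ l * (if j then b' else a') ^ (f l))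
       * gfun \<nu> \<sigma> (if i then b else a) (if j then b' else a'))"
proof -
  have "(\<Sum>l\<in>L. of_rat ((if i = j then 1 else -1) * q l) * c ^ l * c' ^ (f l)) =
        (if i = j then 1 else -1) * (\<Sum>l\<in>L. of_rat (q l) * c ^ l * c' ^ (f l))" for c c' :: real
    by (auto simp: sum_distrib_left of_rat_mult sum_negf)
  then show ?thesis by (simp add: Let_def gfun_def)
qed


theorem lemma2:
  fixes n m :: nat
  shows "\<exists>p :: nat \<Rightarrow> bool \<Rightarrow> bool \<Rightarrow> nat \<Rightarrow> rat.
    \<forall>a b a' b' \<sigma> :: real. \<sigma> > 0 \<longrightarrow>
      gauss_double_int n m a b a' b' \<sigma> =
      (\<Sum>\<nu>\<in>{1..n+m+2}. \<Sum>i\<in>(UNIV :: bool set). \<Sum>j\<in>(UNIV :: bool set).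
         (let c = (if i then b else a); c' = (if j then b' else a'); \<delta> = c - c' in
           (\<Sum>l\<in>{0..n+m+2-\<nu>}. of_rat (p \<nu> i j l) * c ^ l * c' ^ (n+m+2-\<nu>-l))
           * (if even \<nu> then (1 / \<sigma> ^ \<nu>) * exp (- (\<sigma>\<^sup>2 * \<delta>\<^sup>2))
              else (1 / \<sigma> ^ \<nu>) * Erf (\<sigma> * \<delta>))))"
proof -
  obtain K where K: "fm 1 (n+m+2) K" "\<forall>\<sigma>>0. \<forall>a b a' b'.
   gauss_double_int n m a b a' b' \<sigma> = K \<sigma> b b' - K \<sigma> b a' - K \<sigma> a b' + K \<sigma> a a'"
    using main_K by blast
  obtain q where q: "\<forall>\<sigma> x y. K \<sigma> x y =
    (\<Sum>\<nu>\<in>{1..n+m+2}. (\<Sum>l\<in>{0..n+m+2-\<nu>}. of_rat (q \<nu> l) * x ^ l * y ^ (n+m+2-\<nu>-l)) * gfun \<nu> \<sigma> x y)"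
    using fm_explicit[OF K(1)] by blast
  define S where "S \<nu> x y = (\<Sum>l\<in>{0..n+m+2-\<nu>}. of_rat (q \<nu> l) * x ^ l * y ^ (n+m+2-\<nu>-l))" for \<nu> and x y :: real
  show ?thesis
  proof (intro exI[of _ "\<lambda>\<nu> i j l. (if i = j then 1 else -1) * q \<nu> l"] allI impI)
    fix a b a' b' \<sigma> :: real
    assume s: "\<sigma> > 0"
    have "gauss_double_int n m a b a' b' \<sigma> =
      (\<Sum>\<nu>\<in>{1..n+m+2}. S \<nu> b b' * gfun \<nu> \<sigma> b b' - S \<nu> b a' * gfun \<nu> \<sigma> b a'
         - S \<nu> a b' * gfun \<nu> \<sigma> a b' + S \<nu> a a' * gfun \<nu> \<sigma> a a')"
      unfolding K(2)[rule_format, OF s] q[rule_format] S_def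
      by (simp only: sum.distrib sum_subtractf)
    also have "\<dots> = (\<Sum>\<nu>\<in>{1..n+m+2}. \<Sum>i\<in>(UNIV :: bool set). \<Sum>j\<in>(UNIV :: bool set).
         (let c = (if i then b else a); c' = (if j then b' else a'); \<delta> = c - c' in
           (\<Sum>l\<in>{0..n+m+2-\<nu>}. of_rat ((if i = j then 1 else -1) * q \<nu> l) * c ^ l * c' ^ (n+m+2-\<nu>-l))
           * (if even \<nu> then (1 / \<sigma> ^ \<nu>) * exp (- (\<sigma>\<^sup>2 * \<delta>\<^sup>2))
              else (1 / \<sigma> ^ \<nu>) * Erf (\<sigma> * \<delta>))))"
    proof (intro sum.cong refl)
      fix \<nu>
      show "S \<nu> b b' * gfun \<nu> \<sigma> b b' - S \<nu> b a' * gfun \<nu> \<sigma> b a'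
         - S \<nu> a b' * gfun \<nu> \<sigma> a b' + S \<nu> a a' * gfun \<nu> \<sigma> a a' =
         (\<Sum>i\<in>(UNIV :: bool set). \<Sum>j\<in>(UNIV :: bool set).
         (let c = (if i then b else a); c' = (if j then b' else a'); \<delta> = c - c' in
           (\<Sum>l\<in>{0..n+m+2-\<nu>}. of_rat ((if i = j then 1 else -1) * q \<nu> l) * c ^ l * c' ^ (n+m+2-\<nu>-l))
           * (if even \<nu> then (1 / \<sigma> ^ \<nu>) * exp (- (\<sigma>\<^sup>2 * \<delta>\<^sup>2))
              else (1 / \<sigma> ^ \<nu>) * Erf (\<sigma> * \<delta>))))"
        unfolding per_term by (simp add: UNIV_bool S_def)
    qed
    finally show "gauss_double_int n m a b a' b' \<sigma> = (\<Sum>\<nu>\<in>{1..n+m+2}. \<Sum>i\<in>(UNIV :: bool set). \<Sum>j\<in>(UNIV :: bool set).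
         (let c = (if i then b else a); c' = (if j then b' else a'); \<delta> = c - c' in
           (\<Sum>l\<in>{0..n+m+2-\<nu>}. of_rat ((if i = j then 1 else -1) * q \<nu> l) * c ^ l * c' ^ (n+m+2-\<nu>-l))
           * (if even \<nu> then (1 / \<sigma> ^ \<nu>) * exp (- (\<sigma>\<^sup>2 * \<delta>\<^sup>2))
              else (1 / \<sigma> ^ \<nu>) * Erf (\<sigma> * \<delta>))))" .
  qed
qed

end
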